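(* Let $\lambda,\mu$ be partitions of $n$. Then: (1) $\mathbf{E}_\lambda=\mathbf{E}_\mu \iff Z_{\mathbf{E}_\lambda}=Z_{\mathbf{E}_\mu}\iff\lambda=\mu$; (2) $\mathbf{C}_\lambda=\mathbf{C}_\mu \iff Z_{\mathbf{C}_\lambda}=Z_{\mathbf{C}_\mu}\iff\lambda=\mu$; (3) $\mathbf{K}_\lambda=\mathbf{K}_\mu \iff Z_{\mathbf{K}_\lambda}=Z_{\mathbf{K}_\mu}\iff\lambda=\mu$; (4) consequently, in each of the three families $\{\mathbf{E}_\alpha\}_{\alpha\vdash n}$, $\{\mathbf{C}_\alpha\}_{\alpha\vdash n}$, $\{\mathbf{K}_\alpha\}_{\alpha\vdash n}$ the number of distinct isomorphism classes (and of distinct cycle index series) equals $p(n)$, the number of partitions of $n$.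
   Context: Species are functors from finite sets with bijections to finite sets; equality means natural isomorphism. For $H\le S_n$, $X^n/H$ is the species with $(X^n/H)[U]=\{\lambda H:\lambda:[n]\to U\text{ bijection}\}$, transport by left composition. The cycle index series of a species $F$ is $Z_F=\sum_{n\ge0}\frac1{n!}\sum_{\sigma\in S_n}|\mathrm{Fix}\,F[\sigma]|\,p_{\lambda(\sigma)}$, with $\lambda(\sigma)$ the cycle type and $p_\lambda$ power sums. For $\alpha\vdash n$: $\mathbf{E}_\alpha=X^n/S_\alpha$ with $S_\alpha=S_{\alpha_1}\times\cdots\times S_{\alpha_k}$ the Young subgroup; $\mathbf{C}_\alpha=X^n/\langle\sigma_\alpha\rangle$ where $\sigma_\alpha$ is the standard permutation filling cycles of lengths $\alpha_1,\alpha_2,\ldots$ with $1,\ldots,n$ in increasing order; and, writing $\alpha=(i_1^{\alpha_1},\ldots,i_m^{\alpha_m})$ with distinct part sizes $i_j$ of multiplicities $\alpha_j$, $\mathbf{K}_\alpha=X^n/G_\alpha$ where $G_\alpha=\langle\sigma_{i_m^{\alpha_m}}\rangle\times\cdots\times\langle\sigma_{i_1^{\alpha_1}}\rangle$, the factors being cyclic groups generated by standard permutations of shape $i_j^{\alpha_j}$ acting on consecutive disjoint blocks of $[n]$ (equivalently $\mathbf{K}_\alpha$ is the species product of the $\mathbf{C}_{i_j^{\alpha_j}}$). *)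

theory Defs
  imports Complex_Main "HOL-Combinatorics.Permutations" "HOL-Library.Multiset" "HOL-Library.FuncSet"
begin

text \<open>A species is given by its object map U |-> F[U] and its transport map
  sigma |-> F[sigma] (applied to a bijection sigma : U -> V between finite sets).\<close>

record 'b species =
  obj :: "nat set \<Rightarrow> 'b set"
  trans :: "(nat \<Rightarrow> nat) \<Rightarrow> 'b \<Rightarrow> 'b"

text \<open>Equality of species = natural isomorphism.\<close>
definition species_iso :: "'b species \<Rightarrow> 'b species \<Rightarrow> bool" where
  "species_iso F G \<longleftrightarrow>
     (\<exists>\<phi> :: nat set \<Rightarrow> 'b \<Rightarrow> 'b.
        (\<forall>U. finite U \<longrightarrow> bij_betw (\<phi> U) (obj F U) (obj G U)) \<and>
        (\<forall>U V \<sigma>. finite U \<and> finite V \<and> bij_betw \<sigma> U V \<longrightarrow>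
            (\<forall>x\<in>obj F U. \<phi> V (trans F \<sigma> x) = trans G \<sigma> (\<phi> U x))))"

text \<open>The species X^n/H, for H a set of permutations of [n] = {0..<n}:
  (X^n/H)[U] = { lambda H : lambda : [n] -> U bijection }, transport by left composition.\<close>
definition quot_species :: "nat \<Rightarrow> (nat \<Rightarrow> nat) set \<Rightarrow> (nat \<Rightarrow> nat) set species" where
  "quot_species n H =
     \<lparr> obj = (\<lambda>U. {(\<lambda>h. l \<circ> h) ` H | l. bij_betw l {0..<n} U \<and> l \<in> extensional {0..<n}}),
       trans = (\<lambda>\<sigma> c. (\<lambda>f. restrict (\<sigma> \<circ> f) {0..<n}) ` c) \<rparr>"

definition orbit_of :: "(nat \<Rightarrow> nat) \<Rightarrow> nat \<Rightarrow> nat set" where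
  "orbit_of \<sigma> x = {(\<sigma> ^^ k) x | k. True}"

definition cycle_type :: "nat \<Rightarrow> (nat \<Rightarrow> nat) \<Rightarrow> nat multiset" where
  "cycle_type n \<sigma> = image_mset card (mset_set (orbit_of \<sigma> ` {0..<n}))"

text \<open>The cycle index series Z_F, an element of Q[[p_1,p_2,...]], represented by its
  coefficient function in the basis p_lambda (lambda a multiset of part sizes):
  coefficient of p_lambda is (1/n!) * sum over sigma in S_n of cycle type lambda of |Fix F[sigma]|,
  where n = |lambda|.\<close>
definition cycle_index :: "'b species \<Rightarrow> nat multiset \<Rightarrow> rat" where
  "cycle_index F lam =
     (let n = sum_mset lam in
       (\<Sum>\<sigma> \<in> {\<sigma>. \<sigma> permutes {0..<n} \<and> cycle_type n \<sigma> = lam}.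
           of_nat (card {x \<in> obj F {0..<n}. trans F \<sigma> x = x})) / of_nat (fact n))"

definition is_partition :: "nat \<Rightarrow> nat list \<Rightarrow> bool" where
  "is_partition n \<alpha> \<longleftrightarrow> sorted_wrt (\<ge>) \<alpha> \<and> (\<forall>a\<in>set \<alpha>. 0 < a) \<and> sum_list \<alpha> = n"

definition num_partitions :: "nat \<Rightarrow> nat" where
  "num_partitions n = card {\<alpha>. is_partition n \<alpha>}"

text \<open>Standard permutation of shape alpha: cycles (0 1 .. a1-1)(a1 .. a1+a2-1)...\<close>
fun std_perm :: "nat list \<Rightarrow> nat \<Rightarrow> nat" where
  "std_perm [] x = x"
| "std_perm (a # as) x =
     (if x < a then (if Suc x < a then Suc x else 0) else a + std_perm as (x - a))"

fun block_of :: "nat list \<Rightarrow> nat \<Rightarrow> nat" where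
  "block_of [] x = 0"
| "block_of (a # as) x = (if x < a then 0 else Suc (block_of as (x - a)))"

definition young :: "nat list \<Rightarrow> (nat \<Rightarrow> nat) set" where
  "young \<alpha> = {p. p permutes {0..<sum_list \<alpha>} \<and>
                   (\<forall>x < sum_list \<alpha>. block_of \<alpha> (p x) = block_of \<alpha> x)}"

text \<open>Subgroup of S_n generated by a set of permutations (all of finite order here),
  i.e. the closure of the identity under left multiplication by generators.\<close>
inductive_set gen_group :: "(nat \<Rightarrow> nat) set \<Rightarrow> (nat \<Rightarrow> nat) set" for S where
  gen_id: "id \<in> gen_group S"
| gen_mult: "g \<in> S \<Longrightarrow> h \<in> gen_group S \<Longrightarrow> g \<circ> h \<in> gen_group S"

definition cyc_group :: "nat list \<Rightarrow> (nat \<Rightarrow> nat) set" where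
  "cyc_group \<alpha> = gen_group {std_perm \<alpha>}"

definition shift_perm :: "nat \<Rightarrow> nat \<Rightarrow> (nat \<Rightarrow> nat) \<Rightarrow> nat \<Rightarrow> nat" where
  "shift_perm s L g x = (if s \<le> x \<and> x < s + L then s + g (x - s) else x)"

definition runs :: "nat list \<Rightarrow> (nat \<times> nat) list" where
  "runs \<alpha> = map (\<lambda>i. (i, count_list \<alpha> i)) (remdups \<alpha>)"

fun kgens :: "nat \<Rightarrow> (nat \<times> nat) list \<Rightarrow> (nat \<Rightarrow> nat) list" where
  "kgens s [] = []"
| "kgens s ((i, m) # r) =
     shift_perm s (i * m) (std_perm (replicate m i)) # kgens (s + i * m) r"

text \<open>G_alpha = <sigma_{i_m^{alpha_m}}> x ... x <sigma_{i_1^{alpha_1}}> on consecutive blocks.\<close>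
definition K_group :: "nat list \<Rightarrow> (nat \<Rightarrow> nat) set" where
  "K_group \<alpha> = gen_group (set (kgens 0 (runs \<alpha>)))"

definition E_sp :: "nat list \<Rightarrow> (nat \<Rightarrow> nat) set species" where
  "E_sp \<alpha> = quot_species (sum_list \<alpha>) (young \<alpha>)"

definition C_sp :: "nat list \<Rightarrow> (nat \<Rightarrow> nat) set species" where
  "C_sp \<alpha> = quot_species (sum_list \<alpha>) (cyc_group \<alpha>)"

definition K_sp :: "nat list \<Rightarrow> (nat \<Rightarrow> nat) set species" where
  "K_sp \<alpha> = quot_species (sum_list \<alpha>) (K_group \<alpha>)"

definition num_iso_classes :: "nat \<Rightarrow> (nat list \<Rightarrow> 'b species) \<Rightarrow> nat" where
  "num_iso_classes n F =
     card ({\<alpha>. is_partition n \<alpha>} //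
           {(\<alpha>, \<beta>). is_partition n \<alpha> \<and> is_partition n \<beta> \<and> species_iso (F \<alpha>) (F \<beta>)})"

definition num_cycle_indices :: "nat \<Rightarrow> (nat list \<Rightarrow> 'b species) \<Rightarrow> nat" where
  "num_cycle_indices n F = card ((\<lambda>\<alpha>. cycle_index (F \<alpha>)) ` {\<alpha>. is_partition n \<alpha>})"

end

theory Submission
  imports Defs
begin


lemma block_of_lt: "x < sum_list L \<Longrightarrow> block_of L x < length L"
  by (induction L arbitrary: x) (auto)

lemma block_card: "j < length L \<Longrightarrow> card {y. y < sum_list L \<and> block_of L y = j} = L ! j"
proof (induction L arbitrary: j)
  case Nil then show ?case by simp
next
  case (Cons a as)
  show ?case
  proof (cases j)
    case 0
    have "{y. y < sum_list (a # as) \<and> block_of (a # as) y = j} = {0..<a}"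
      using 0 by auto
    then show ?thesis using 0 by simp
  next
    case (Suc j')
    have "{y. y < sum_list (a # as) \<and> block_of (a # as) y = j} =
          (\<lambda>z. z + a) ` {z. z < sum_list as \<and> block_of as z = j'}"
    proof (rule set_eqI, rule iffI)
      fix y assume "y \<in> {y. y < sum_list (a # as) \<and> block_of (a # as) y = j}"
      then have "y - a \<in> {z. z < sum_list as \<and> block_of as z = j'}" "y = y - a + a"
        using Suc by (auto split: if_splits)
      then show "y \<in> (\<lambda>z. z + a) ` {z. z < sum_list as \<and> block_of as z = j'}" by blast
    qed (use Suc in auto)
    moreover have "card ((\<lambda>z. z + a) ` {z. z < sum_list as \<and> block_of as z = j'}) =
        card {z. z < sum_list as \<and> block_of as z = j'}"
      by (rule card_image) (auto simp: inj_on_def)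
    ultimately show ?thesis using Suc Cons by simp
  qed
qed

lemma std_perm_out: "sum_list L \<le> x \<Longrightarrow> std_perm L x = x"
  by (induction L arbitrary: x) auto

lemma std_perm_in: "x < sum_list L \<Longrightarrow> std_perm L x < sum_list L \<and> block_of L (std_perm L x) = block_of L x"
  by (induction L arbitrary: x) auto

lemma std_perm_low: "x < a \<Longrightarrow> std_perm (a # as) x = (if Suc x < a then Suc x else 0)"
  by simp

lemma std_perm_high: "a \<le> x \<Longrightarrow> std_perm (a # as) x = a + std_perm as (x - a)"
  by simp

lemma std_perm_inj: "inj (std_perm L)"
proof (induction L)
  case Nil then show ?case by (simp add: inj_on_def)
next
  case (Cons a as)
  show ?case
  proof (rule injI)
    fix x y assume e: "std_perm (a # as) x = std_perm (a # as) y"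
    show "x = y"
    proof (cases "x < a")
      case xa: True
      show ?thesis
      proof (cases "y < a")
        case True
        then show ?thesis using e xa by (simp only: std_perm_low) (auto split: if_split_asm)
      next
        case False
        have "std_perm (a # as) x < a" using xa by (simp only: std_perm_low) auto
        moreover have "std_perm (a # as) y \<ge> a" using False by (simp only: std_perm_high)
        ultimately show ?thesis using e by simp
      qed
    next
      case xa: False
      show ?thesis
      proof (cases "y < a")
        case True
        have "std_perm (a # as) y < a" using True by (simp only: std_perm_low) auto
        moreover have "std_perm (a # as) x \<ge> a" using xa by (simp only: std_perm_high)
        ultimately show ?thesis using e by simp
      next
        case False
        have "std_perm as (x - a) = std_perm as (y - a)"
          using e xa False by (simp only: std_perm_high)
        then have "x - a = y - a" using Cons.IH by (simp add: inj_eq)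
        then show ?thesis using xa False by simp
      qed
    qed
  qed
qed

lemma std_perm_permutes: "std_perm L permutes {0..<sum_list L}"
proof (rule bij_imp_permutes)
  have sub: "std_perm L ` {0..<sum_list L} \<subseteq> {0..<sum_list L}" using std_perm_in by auto
  have inj: "inj_on (std_perm L) {0..<sum_list L}" using inj_on_subset[OF std_perm_inj subset_UNIV] .
  have "std_perm L ` {0..<sum_list L} = {0..<sum_list L}"
    by (rule endo_inj_surj[OF _ sub inj]) simp
  then show "bij_betw (std_perm L) {0..<sum_list L} {0..<sum_list L}"
    using inj by (simp add: bij_betw_def)
next
  fix x assume "x \<notin> {0..<sum_list L}"
  then show "std_perm L x = x" using std_perm_out by simp
qed

lemma std_perm_pow_low: "x < a \<Longrightarrow> (std_perm (a # as) ^^ k) x = (x + k) mod a"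
proof (induction k)
  case 0 then show ?case by simp
next
  case (Suc k)
  have lt: "(x + k) mod a < a" using Suc.prems by simp
  have "std_perm (a # as) ((x + k) mod a) = Suc (x + k) mod a"
    using lt by (simp add: mod_Suc)
  have "(std_perm (a # as) ^^ Suc k) x = std_perm (a # as) ((std_perm (a # as) ^^ k) x)"
    by (simp del: std_perm.simps)
  then show ?case using Suc \<open>std_perm (a # as) ((x + k) mod a) = Suc (x + k) mod a\<close>
    by (simp del: std_perm.simps)
qed

lemma std_perm_pow_high: "(std_perm (a # as) ^^ k) (a + z) = a + (std_perm as ^^ k) z"
  by (induction k) auto

lemma std_perm_orbit: "x < sum_list L \<Longrightarrow> y < sum_list L \<Longrightarrow> block_of L y = block_of L x \<Longrightarrow>
   \<exists>k. (std_perm L ^^ k) x = y"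
proof (induction L arbitrary: x y)
  case Nil then show ?case by simp
next
  case (Cons a as)
  show ?case
  proof (cases "x < a")
    case True
    then have "y < a" using Cons.prems by (auto split: if_splits)
    then have "(std_perm (a # as) ^^ (y + a - x)) x = y"
      using True by (simp add: std_perm_pow_low)
    then show ?thesis by blast
  next
    case False
    then have "\<not> y < a" using Cons.prems by (auto split: if_splits)
    have "x - a < sum_list as" "y - a < sum_list as" using Cons.prems False \<open>\<not> y < a\<close> by auto
    moreover have "block_of as (y - a) = block_of as (x - a)" using Cons.prems False \<open>\<not> y < a\<close> by auto
    ultimately obtain k where "(std_perm as ^^ k) (x - a) = y - a"
      using Cons.IH[of "x - a" "y - a"] by blast
    then have "(std_perm (a # as) ^^ k) (a + (x - a)) = y"
      using \<open>\<not> y < a\<close> by (simp add: std_perm_pow_high)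
    then have "(std_perm (a # as) ^^ k) x = y" using False by simp
    then show ?thesis by blast
  qed
qed



definition bp :: "nat list \<Rightarrow> (nat \<Rightarrow> nat) \<Rightarrow> bool" where
  "bp L h \<longleftrightarrow> (\<forall>x<sum_list L. h x < sum_list L \<and> block_of L (h x) = block_of L x) \<and>
      (\<forall>x. sum_list L \<le> x \<longrightarrow> h x = x)"

definition blkset :: "nat list \<Rightarrow> nat \<Rightarrow> nat set" where
  "blkset L j = {y. y < sum_list L \<and> block_of L y = j}"

lemma bp_pow: "bp L h \<Longrightarrow> x < sum_list L \<Longrightarrow>
   (h ^^ k) x < sum_list L \<and> block_of L ((h ^^ k) x) = block_of L x"
  by (induction k) (auto simp: bp_def)

lemma orbit_sub: "bp L h \<Longrightarrow> x < sum_list L \<Longrightarrow> orbit_of h x \<subseteq> blkset L (block_of L x)"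
  using bp_pow[of L h x] by (auto simp: orbit_of_def blkset_def)

lemma orbit_self: "x \<in> orbit_of h x"
  unfolding orbit_of_def by (auto intro: exI[of _ 0])

lemma block_surj:
  assumes "\<forall>a\<in>set L. 0 < a"
  shows "block_of L ` {0..<sum_list L} = {0..<length L}"
proof
  show "block_of L ` {0..<sum_list L} \<subseteq> {0..<length L}" using block_of_lt by auto
  show "{0..<length L} \<subseteq> block_of L ` {0..<sum_list L}"
  proof
    fix j assume j: "j \<in> {0..<length L}"
    then have "card (blkset L j) = L ! j" using block_card by (simp add: blkset_def)
    moreover have "L ! j > 0" using assms j by auto
    ultimately have "blkset L j \<noteq> {}" by auto
    then show "j \<in> block_of L ` {0..<sum_list L}" by (auto simp: blkset_def)
  qed
qed

lemma orbits_finite: "finite (orbit_of h ` {0..<n})" by simp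

lemma size_ct: "size (cycle_type n h) = card (orbit_of h ` {0..<n})"
  by (simp add: cycle_type_def)

lemma core_ge:
  assumes pos: "\<forall>a\<in>set L. 0 < a" and bph: "bp L h"
  shows "length L \<le> size (cycle_type (sum_list L) h) \<and>
    (size (cycle_type (sum_list L) h) = length L \<longrightarrow>
      (\<forall>x<sum_list L. blkset L (block_of L x) \<subseteq> orbit_of h x))"
proof -
  define n where "n = sum_list L"
  define Ob where "Ob = orbit_of h ` {0..<n}"
  define g where "g = (\<lambda>S. block_of L ` S)"
  have gx: "g (orbit_of h x) = {block_of L x}" if "x < n" for x
  proof -
    have "orbit_of h x \<subseteq> blkset L (block_of L x)" using orbit_sub[OF bph] that n_def by auto
    then show ?thesis using orbit_self[of x h] unfolding g_def blkset_def by blast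
  qed
  have "g ` Ob = (\<lambda>x. {block_of L x}) ` {0..<n}"
    unfolding Ob_def image_image using gx by (intro image_cong) auto
  also have "\<dots> = (\<lambda>j. {j}) ` (block_of L ` {0..<n})" by (simp add: image_image)
  also have "\<dots> = (\<lambda>j. {j}) ` {0..<length L}" using block_surj[OF pos] n_def by simp
  finally have gOb: "g ` Ob = (\<lambda>j. {j}) ` {0..<length L}" .
  have cg: "card (g ` Ob) = length L" unfolding gOb by (subst card_image) (auto simp: inj_on_def)
  have fOb: "finite Ob" unfolding Ob_def by simp
  have le: "card (g ` Ob) \<le> card Ob" using card_image_le[OF fOb] .
  have sz: "size (cycle_type n h) = card Ob" unfolding Ob_def by (simp add: size_ct)
  show ?thesis
  proof (intro conjI impI allI)
    show "length L \<le> size (cycle_type (sum_list L) h)" using cg le sz n_def by simp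
  next
    fix x assume eq: "size (cycle_type (sum_list L) h) = length L" and x: "x < sum_list L"
    have "inj_on g Ob" using eq_card_imp_inj_on[OF fOb] eq cg sz n_def by simp
    show "blkset L (block_of L x) \<subseteq> orbit_of h x"
    proof
      fix y assume y: "y \<in> blkset L (block_of L x)"
      then have yn: "y < n" and yb: "block_of L y = block_of L x" by (auto simp: blkset_def n_def)
      have "g (orbit_of h y) = g (orbit_of h x)" using gx yn x yb n_def by simp
      moreover have "orbit_of h y \<in> Ob" "orbit_of h x \<in> Ob" using yn x n_def by (auto simp: Ob_def)
      ultimately have "orbit_of h y = orbit_of h x" using \<open>inj_on g Ob\<close> by (auto simp: inj_on_def)
      then show "y \<in> orbit_of h x" using orbit_self[of y h] by simp
    qed
  qed
qed

lemma core_eq: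
  assumes pos: "\<forall>a\<in>set L. 0 < a" and bph: "bp L h"
    and full: "\<forall>x<sum_list L. blkset L (block_of L x) \<subseteq> orbit_of h x"
  shows "cycle_type (sum_list L) h = mset L"
proof -
  define n where "n = sum_list L"
  have orb: "orbit_of h x = blkset L (block_of L x)" if "x < n" for x
    using orbit_sub[OF bph] full that n_def by blast
  have "orbit_of h ` {0..<n} = (\<lambda>x. blkset L (block_of L x)) ` {0..<n}"
    using orb by (intro image_cong) auto
  also have "\<dots> = blkset L ` (block_of L ` {0..<n})" by (simp add: image_image)
  also have "\<dots> = blkset L ` {0..<length L}" using block_surj[OF pos] n_def by simp
  finally have Ob: "orbit_of h ` {0..<n} = blkset L ` {0..<length L}" .
  have inj: "inj_on (blkset L) {0..<length L}"
  proof (rule inj_onI)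
    fix i j assume i: "i \<in> {0..<length L}" and j: "j \<in> {0..<length L}" and e: "blkset L i = blkset L j"
    have "card (blkset L i) = L ! i" using block_card i by (simp add: blkset_def)
    moreover have "L ! i > 0" using pos i by auto
    ultimately obtain y where "y \<in> blkset L i" by fastforce
    then show "i = j" using e by (auto simp: blkset_def)
  qed
  have "cycle_type n h = image_mset card (mset_set (blkset L ` {0..<length L}))"
    unfolding cycle_type_def Ob ..
  also have "\<dots> = image_mset card (image_mset (blkset L) (mset_set {0..<length L}))"
    using image_mset_mset_set[OF inj] by simp
  also have "\<dots> = image_mset (\<lambda>j. L ! j) (mset_set {0..<length L})"
    unfolding image_mset.compositionality
    by (rule image_mset_cong) (simp add: block_card blkset_def)
  also have "\<dots> = mset (map (\<lambda>j. L ! j) [0..<length L])" by simp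
  also have "\<dots> = mset L" by (simp add: map_nth)
  finally show ?thesis using n_def by simp
qed

lemma std_perm_bp: "bp L (std_perm L)"
  unfolding bp_def using std_perm_in std_perm_out by auto

lemma std_perm_ct:
  assumes pos: "\<forall>a\<in>set L. 0 < a"
  shows "cycle_type (sum_list L) (std_perm L) = mset L"
proof (rule core_eq[OF pos std_perm_bp], intro allI impI subsetI)
  fix x y assume x: "x < sum_list L" and y: "y \<in> blkset L (block_of L x)"
  then obtain k where "(std_perm L ^^ k) x = y" using std_perm_orbit[of x L y] by (auto simp: blkset_def)
  then show "y \<in> orbit_of (std_perm L) x" by (auto simp: orbit_of_def)
qed



lemma obj_q: "obj (quot_species n H) U =
   {(\<lambda>h. l \<circ> h) ` H | l. bij_betw l {0..<n} U \<and> l \<in> extensional {0..<n}}"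
  by (simp add: quot_species_def)

lemma trans_q: "trans (quot_species n H) \<sigma> c = (\<lambda>f. restrict (\<sigma> \<circ> f) {0..<n}) ` c"
  by (simp add: quot_species_def)

lemma obj_q_finite: "finite (obj (quot_species n H) {0..<m})"
proof -
  have "obj (quot_species n H) {0..<m} \<subseteq> (\<lambda>l. (\<lambda>h. l \<circ> h) ` H) ` ({0..<n} \<rightarrow>\<^sub>E {0..<m})"
  proof
    fix C assume "C \<in> obj (quot_species n H) {0..<m}"
    then obtain l where "C = (\<lambda>h. l \<circ> h) ` H" "bij_betw l {0..<n} {0..<m}" "l \<in> extensional {0..<n}"
      unfolding obj_q by blast
    then show "C \<in> (\<lambda>l. (\<lambda>h. l \<circ> h) ` H) ` ({0..<n} \<rightarrow>\<^sub>E {0..<m})"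
      by (intro image_eqI[of _ _ l]) (auto simp: bij_betw_def PiE_def)
  qed
  moreover have "finite ({0..<n} \<rightarrow>\<^sub>E {0..<m})" by (simp add: finite_PiE)
  ultimately show ?thesis by (meson finite_imageI finite_subset)
qed

lemma ci_nonzero_iff: "cycle_index F \<rho> \<noteq> 0 \<longleftrightarrow>
   (\<exists>\<sigma>. \<sigma> permutes {0..<sum_mset \<rho>} \<and> cycle_type (sum_mset \<rho>) \<sigma> = \<rho> \<and>
        card {x \<in> obj F {0..<sum_mset \<rho>}. trans F \<sigma> x = x} \<noteq> 0)"
proof -
  define n where "n = sum_mset \<rho>"
  define S where "S = {\<sigma>. \<sigma> permutes {0..<n} \<and> cycle_type n \<sigma> = \<rho>}"
  have fS: "finite S"
    by (rule finite_subset[OF _ finite_permutations[of "{0..<n}"]]) (auto simp: S_def)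
  define s where "s = (\<Sum>\<sigma>\<in>S. card {x \<in> obj F {0..<n}. trans F \<sigma> x = x})"
  have e: "cycle_index F \<rho> = of_nat s / of_nat (fact n)"
    unfolding cycle_index_def Let_def S_def n_def s_def by (simp only: of_nat_sum)
  have fn: "(of_nat (fact n) :: rat) \<noteq> 0" by simp
  have "cycle_index F \<rho> \<noteq> 0 \<longleftrightarrow> (of_nat s :: rat) \<noteq> 0"
    unfolding e using fn by simp
  then have "cycle_index F \<rho> \<noteq> 0 \<longleftrightarrow> (\<Sum>\<sigma>\<in>S. card {x \<in> obj F {0..<n}. trans F \<sigma> x = x}) \<noteq> 0"
    unfolding s_def by (simp only: of_nat_eq_0_iff)
  also have "\<dots> \<longleftrightarrow> (\<exists>\<sigma>\<in>S. card {x \<in> obj F {0..<n}. trans F \<sigma> x = x} \<noteq> 0)"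
    using fS by simp
  finally show ?thesis unfolding S_def n_def by auto
qed

lemma conj_ct:
  assumes l: "bij_betw l {0..<n} {0..<n}" and hn: "\<forall>x<n. h x < n"
    and c: "\<forall>x<n. \<sigma> (l x) = l (h x)"
  shows "cycle_type n \<sigma> = cycle_type n h"
proof -
  have pw: "(\<sigma> ^^ k) (l x) = l ((h ^^ k) x) \<and> (h ^^ k) x < n" if "x < n" for x k
    using that by (induction k) (auto simp: c hn)
  have orb: "orbit_of \<sigma> (l x) = l ` orbit_of h x" if "x < n" for x
    using pw[OF that] by (auto simp: orbit_of_def)
  have "orbit_of \<sigma> ` {0..<n} = orbit_of \<sigma> ` (l ` {0..<n})" using l by (simp add: bij_betw_def)
  also have "\<dots> = (\<lambda>x. l ` orbit_of h x) ` {0..<n}" unfolding image_image using orb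
    by (intro image_cong) auto
  also have "\<dots> = image l ` (orbit_of h ` {0..<n})" by (simp add: image_image)
  finally have O: "orbit_of \<sigma> ` {0..<n} = image l ` (orbit_of h ` {0..<n})" .
  have sub: "\<And>S. S \<in> orbit_of h ` {0..<n} \<Longrightarrow> S \<subseteq> {0..<n}"
    using pw by (auto simp: orbit_of_def)
  have il: "inj_on l {0..<n}" using l by (simp add: bij_betw_def)
  have inj: "inj_on (image l) (orbit_of h ` {0..<n})"
    by (rule inj_on_image, rule inj_on_subset[OF il]) (use sub in auto)
  have "cycle_type n \<sigma> = image_mset card (image_mset (image l) (mset_set (orbit_of h ` {0..<n})))"
    unfolding cycle_type_def O image_mset_mset_set[OF inj] ..
  also have "\<dots> = image_mset card (mset_set (orbit_of h ` {0..<n}))"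
    unfolding image_mset.compositionality
    by (rule image_mset_cong) (use sub il in \<open>auto intro!: card_image inj_on_subset[OF il]\<close>)
  finally show ?thesis unfolding cycle_type_def .
qed

definition good :: "nat list \<Rightarrow> (nat \<Rightarrow> nat) set \<Rightarrow> bool" where
  "good L H \<longleftrightarrow> id \<in> H \<and> (\<forall>h\<in>H. bp L h) \<and> (\<forall>g\<in>H. \<forall>h\<in>H. g \<circ> h \<in> H) \<and> std_perm L \<in> H"

lemma bp_finite: "finite {h. bp L h}"
proof (rule inj_on_finite[where f="\<lambda>h. restrict h {0..<sum_list L}"])
  show "inj_on (\<lambda>h. restrict h {0..<sum_list L}) {h. bp L h}"
  proof (rule inj_onI, rule ext)
    fix g h x assume g: "g \<in> {h. bp L h}" and h: "h \<in> {h. bp L h}"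
      and e: "restrict g {0..<sum_list L} = restrict h {0..<sum_list L}"
    show "g x = h x"
    proof (cases "x < sum_list L")
      case True then show ?thesis using fun_cong[OF e, of x] by simp
    next
      case False then show ?thesis using g h by (auto simp: bp_def)
    qed
  qed
  show "(\<lambda>h. restrict h {0..<sum_list L}) ` {h. bp L h} \<subseteq> {0..<sum_list L} \<rightarrow>\<^sub>E {0..<sum_list L}"
    by (auto simp: bp_def)
  show "finite ({0..<sum_list L} \<rightarrow>\<^sub>E {0..<sum_list L})" by (simp add: finite_PiE)
qed

lemma support_in:
  assumes pos: "\<forall>a\<in>set L. 0 < a" and G: "good L H"
  shows "cycle_index (quot_species (sum_list L) H) (mset L) \<noteq> 0"
proof -
  define n where "n = sum_list L"
  define \<sigma> where "\<sigma> = std_perm L"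
  define l0 where "l0 = restrict id {0..<n}"
  define C0 where "C0 = (\<lambda>h. l0 \<circ> h) ` H"
  have bpH: "\<And>h. h \<in> H \<Longrightarrow> bp L h" using G by (auto simp: good_def)
  have fH: "finite H" by (rule finite_subset[OF _ bp_finite[of L]]) (use bpH in blast)
  have sH: "\<sigma> \<in> H" using G by (simp add: good_def \<sigma>_def)
  have "(\<lambda>h. \<sigma> \<circ> h) ` H \<subseteq> H" using G sH by (auto simp: good_def)
  moreover have "inj_on (\<lambda>h. \<sigma> \<circ> h) H"
  proof (rule inj_onI, rule ext)
    fix g h x assume e: "\<sigma> \<circ> g = \<sigma> \<circ> h"
    show "g x = h x" using fun_cong[OF e, of x] std_perm_inj[of L] unfolding \<sigma>_def
      by (simp add: inj_eq)
  qed
  ultimately have sHH: "(\<lambda>h. \<sigma> \<circ> h) ` H = H" using endo_inj_surj[OF fH] by blast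
  have C0obj: "C0 \<in> obj (quot_species n H) {0..<n}"
    unfolding obj_q C0_def
  proof (intro CollectI exI conjI)
    show "bij_betw l0 {0..<n} {0..<n}" unfolding l0_def
      by (rule bij_betw_cong[THEN iffD1, of _ id]) auto
    show "l0 \<in> extensional {0..<n}" by (simp add: l0_def)
  qed simp
  have "trans (quot_species n H) \<sigma> C0 = (\<lambda>h. l0 \<circ> (\<sigma> \<circ> h)) ` H"
    unfolding trans_q C0_def image_image
  proof (rule image_cong[OF refl], rule ext)
    fix h x assume h: "h \<in> H"
    have "bp L h" "bp L \<sigma>" using bpH[OF h] bpH[OF sH] .
    then show "restrict (\<sigma> \<circ> (l0 \<circ> h)) {0..<n} x = (l0 \<circ> (\<sigma> \<circ> h)) x"
      by (cases "x < n") (auto simp: l0_def bp_def n_def)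
  qed
  also have "\<dots> = (\<lambda>h. l0 \<circ> h) ` ((\<lambda>h. \<sigma> \<circ> h) ` H)"
    by (simp add: image_image)
  also have "\<dots> = C0" unfolding C0_def sHH ..
  finally have "trans (quot_species n H) \<sigma> C0 = C0" .
  then have ne: "{x \<in> obj (quot_species n H) {0..<n}. trans (quot_species n H) \<sigma> x = x} \<noteq> {}"
    using C0obj by blast
  have "card {x \<in> obj (quot_species n H) {0..<n}. trans (quot_species n H) \<sigma> x = x} \<noteq> 0"
    using ne obj_q_finite[of n H n] by simp
  moreover have "\<sigma> permutes {0..<n}" unfolding \<sigma>_def n_def by (rule std_perm_permutes)
  moreover have "cycle_type n \<sigma> = mset L" unfolding \<sigma>_def n_def by (rule std_perm_ct[OF pos])
  ultimately show ?thesis unfolding ci_nonzero_iff n_def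
    by (intro exI[of _ \<sigma>]) (simp add: sum_mset_sum_list)
qed

lemma support_out:
  assumes G: "good L H" and sr: "sum_mset \<rho> = sum_list L"
    and nz: "cycle_index (quot_species (sum_list L) H) \<rho> \<noteq> 0"
  shows "\<exists>h\<in>H. cycle_type (sum_list L) h = \<rho>"
proof -
  define n where "n = sum_list L"
  obtain \<sigma> where sp: "\<sigma> permutes {0..<n}" and ct: "cycle_type n \<sigma> = \<rho>"
    and c: "card {x \<in> obj (quot_species n H) {0..<n}. trans (quot_species n H) \<sigma> x = x} \<noteq> 0"
    using nz unfolding ci_nonzero_iff sr n_def by blast
  have "{x \<in> obj (quot_species n H) {0..<n}. trans (quot_species n H) \<sigma> x = x} \<noteq> {}"
    using c by (metis card.empty)
  then obtain C where C: "C \<in> obj (quot_species n H) {0..<n}" and fx: "trans (quot_species n H) \<sigma> C = C"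
    by blast
  then obtain l where Cl: "C = (\<lambda>h. l \<circ> h) ` H" and l: "bij_betw l {0..<n} {0..<n}"
    unfolding obj_q by blast
  have "id \<in> H" using G by (simp add: good_def)
  then have "l \<in> C" using Cl by (metis comp_id image_eqI)
  then have "restrict (\<sigma> \<circ> l) {0..<n} \<in> C" using fx unfolding trans_q by blast
  then obtain h where h: "h \<in> H" and e: "restrict (\<sigma> \<circ> l) {0..<n} = l \<circ> h" using Cl by auto
  have bh: "bp L h" using G h by (simp add: good_def)
  have "cycle_type n \<sigma> = cycle_type n h"
  proof (rule conj_ct[OF l])
    show "\<forall>x<n. h x < n" using bh by (simp add: bp_def n_def)
    show "\<forall>x<n. \<sigma> (l x) = l (h x)"
    proof (intro allI impI)
      fix x assume "x < n" then show "\<sigma> (l x) = l (h x)" using fun_cong[OF e, of x] by simp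
    qed
  qed
  then show ?thesis using h ct n_def by auto
qed

lemma support_le:
  assumes pos: "\<forall>a\<in>set L. 0 < a" and G: "good L H" and sr: "sum_mset \<rho> = sum_list L"
    and nz: "cycle_index (quot_species (sum_list L) H) \<rho> \<noteq> 0"
  shows "length L \<le> size \<rho> \<and> (size \<rho> = length L \<longrightarrow> \<rho> = mset L)"
proof -
  obtain h where h: "h \<in> H" and ct: "cycle_type (sum_list L) h = \<rho>"
    using support_out[OF G sr nz] by blast
  have bh: "bp L h" using G h by (simp add: good_def)
  show ?thesis using core_ge[OF pos bh] core_eq[OF pos bh] ct by auto
qed



lemma iso_ci:
  assumes iso: "species_iso F G"
    and cl: "\<And>m \<sigma> x. \<sigma> permutes {0..<m} \<Longrightarrow> x \<in> obj F {0..<m} \<Longrightarrow> trans F \<sigma> x \<in> obj F {0..<m}"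
  shows "cycle_index F = cycle_index G"
proof (rule ext)
  fix \<rho>
  obtain \<phi> where P1: "\<forall>U. finite U \<longrightarrow> bij_betw (\<phi> U) (obj F U) (obj G U)"
    and P2: "\<forall>U V \<sigma>. finite U \<and> finite V \<and> bij_betw \<sigma> U V \<longrightarrow>
            (\<forall>x\<in>obj F U. \<phi> V (trans F \<sigma> x) = trans G \<sigma> (\<phi> U x))"
    using iso unfolding species_iso_def by (elim exE conjE) 
  have bij: "\<And>U. finite U \<Longrightarrow> bij_betw (\<phi> U) (obj F U) (obj G U)" using P1 by simp
  have nat: "\<And>U V \<sigma> x. finite U \<Longrightarrow> finite V \<Longrightarrow> bij_betw \<sigma> U V \<Longrightarrow> x \<in> obj F U \<Longrightarrow>
        \<phi> V (trans F \<sigma> x) = trans G \<sigma> (\<phi> U x)" using P2 by blast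
  have eq: "card {x \<in> obj F {0..<m}. trans F \<sigma> x = x} = card {x \<in> obj G {0..<m}. trans G \<sigma> x = x}"
    if sp: "\<sigma> permutes {0..<m}" for m \<sigma>
  proof -
    define U where "U = {0..<m::nat}"
    have b: "bij_betw (\<phi> U) (obj F U) (obj G U)" using bij U_def by simp
    have bs: "bij_betw \<sigma> U U" using permutes_imp_bij[OF sp] U_def by simp
    have n: "\<And>x. x \<in> obj F U \<Longrightarrow> \<phi> U (trans F \<sigma> x) = trans G \<sigma> (\<phi> U x)"
      using nat[OF _ _ bs] U_def by simp
    have "\<phi> U ` {x \<in> obj F U. trans F \<sigma> x = x} = {x \<in> obj G U. trans G \<sigma> x = x}"
    proof (intro equalityI subsetI)
      fix y assume "y \<in> \<phi> U ` {x \<in> obj F U. trans F \<sigma> x = x}"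
      then obtain x where x: "x \<in> obj F U" "trans F \<sigma> x = x" "y = \<phi> U x" by blast
      then show "y \<in> {x \<in> obj G U. trans G \<sigma> x = x}" using n[OF x(1)] b
        by (auto simp: bij_betw_def)
    next
      fix y assume y: "y \<in> {x \<in> obj G U. trans G \<sigma> x = x}"
      then obtain x where x: "x \<in> obj F U" "y = \<phi> U x" using b by (auto simp: bij_betw_def)
      have tx: "trans F \<sigma> x \<in> obj F U" using cl[OF sp] x U_def by simp
      have "\<phi> U (trans F \<sigma> x) = \<phi> U x" using n[OF x(1)] x y by simp
      then have "trans F \<sigma> x = x" using b tx x by (auto simp: bij_betw_def inj_on_def)
      then show "y \<in> \<phi> U ` {x \<in> obj F U. trans F \<sigma> x = x}" using x by blast
    qed
    moreover have "inj_on (\<phi> U) {x \<in> obj F U. trans F \<sigma> x = x}"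
      using b by (auto simp: bij_betw_def inj_on_def)
    ultimately show ?thesis unfolding U_def[symmetric] using card_image by fastforce
  qed
  show "cycle_index F \<rho> = cycle_index G \<rho>"
    unfolding cycle_index_def Let_def by (intro arg_cong2[where f="(/)"] sum.cong refl) (simp add: eq)
qed

lemma q_closed:
  assumes H: "\<And>h x. h \<in> H \<Longrightarrow> (x < n \<longrightarrow> h x < n) \<and> (n \<le> x \<longrightarrow> h x = x)"
    and sp: "\<sigma> permutes {0..<m}" and C: "C \<in> obj (quot_species n H) {0..<m}"
  shows "trans (quot_species n H) \<sigma> C \<in> obj (quot_species n H) {0..<m}"
proof -
  obtain l where Cl: "C = (\<lambda>h. l \<circ> h) ` H" and l: "bij_betw l {0..<n} {0..<m}"
    using C unfolding obj_q by blast
  define l' where "l' = restrict (\<sigma> \<circ> l) {0..<n}"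
  have "bij_betw (\<sigma> \<circ> l) {0..<n} {0..<m}"
    using bij_betw_trans[OF l permutes_imp_bij[OF sp]] .
  then have bl: "bij_betw l' {0..<n} {0..<m}" unfolding l'_def
    by (rule bij_betw_cong[THEN iffD1, rotated]) auto
  have "trans (quot_species n H) \<sigma> C = (\<lambda>h. l' \<circ> h) ` H"
    unfolding trans_q Cl image_image
  proof (rule image_cong[OF refl], rule ext)
    fix h x assume h: "h \<in> H"
    show "restrict (\<sigma> \<circ> (l \<circ> h)) {0..<n} x = (l' \<circ> h) x"
      using H[OF h, of x] by (cases "x < n") (auto simp: l'_def)
  qed
  then show ?thesis unfolding obj_q using bl by (auto simp: l'_def)
qed

lemma iso_refl: "species_iso F F"
  unfolding species_iso_def by (intro exI[of _ "\<lambda>U x. x"]) (auto simp: bij_betw_def)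

lemma partition_mset_eq:
  assumes "is_partition n a" "is_partition n b" "mset a = mset b"
  shows "a = b"
proof -
  have sa: "sorted (rev a)" and sb: "sorted (rev b)"
    using assms by (auto simp: is_partition_def sorted_wrt_rev)
  have "sort (rev a) = rev b" by (rule properties_for_sort) (use assms sb in auto)
  moreover have "sort (rev a) = rev a" using sa by (simp add: sorted_sort_id)
  ultimately show ?thesis by simp
qed

lemma quotient_Id: "P // {(a, b). a \<in> P \<and> b \<in> P \<and> a = b} = (\<lambda>x. {x}) ` P"
  unfolding quotient_def by auto

lemma family_thm:
  fixes F :: "nat list \<Rightarrow> (nat \<Rightarrow> nat) set species"
  assumes Fd: "\<And>a. F a = quot_species (sum_list a) (Hf a)"
    and G: "\<And>a. is_partition n a \<Longrightarrow> good (Lf a) (Hf a) \<and> mset (Lf a) = mset a"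
    and lam: "is_partition n lam" and mu: "is_partition n mu"
  shows "(species_iso (F lam) (F mu) \<longleftrightarrow> lam = mu) \<and>
         (cycle_index (F lam) = cycle_index (F mu) \<longleftrightarrow> lam = mu) \<and>
         num_iso_classes n F = num_partitions n \<and> num_cycle_indices n F = num_partitions n"
proof -
  have props: "good (Lf a) (Hf a) \<and> (\<forall>x\<in>set (Lf a). 0 < x) \<and> sum_list (Lf a) = n \<and>
      F a = quot_species (sum_list (Lf a)) (Hf a) \<and> mset (Lf a) = mset a"
    if a: "is_partition n a" for a
  proof -
    have m: "mset (Lf a) = mset a" and g: "good (Lf a) (Hf a)" using G[OF a] by auto
    have "set (Lf a) = set a" using m by (metis set_mset_mset)
    moreover have "sum_list (Lf a) = sum_list a" using m by (metis sum_mset_sum_list)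
    ultimately show ?thesis using a g m Fd by (auto simp: is_partition_def)
  qed
  have ci_inj: "a = b" if a: "is_partition n a" and b: "is_partition n b"
    and e: "cycle_index (F a) = cycle_index (F b)" for a b
  proof -
    have le: "length (Lf x) \<le> length (Lf y)"
      if x: "is_partition n x" and y: "is_partition n y"
      and e: "cycle_index (F x) = cycle_index (F y)" for x y
    proof -
      have "cycle_index (F y) (mset (Lf y)) \<noteq> 0"
        using support_in[of "Lf y" "Hf y"] props[OF y] by auto
      then have nz: "cycle_index (quot_species (sum_list (Lf x)) (Hf x)) (mset (Lf y)) \<noteq> 0"
        using e props[OF x] by simp
      have "sum_mset (mset (Lf y)) = sum_list (Lf x)"
        by (simp only: sum_mset_sum_list) (use props[OF x] props[OF y] in auto)
      then show ?thesis using support_le[OF _ _ _ nz] props[OF x] by auto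
    qed
    have "length (Lf a) = length (Lf b)" using le[OF a b e] le[OF b a e[symmetric]] by simp
    moreover have "cycle_index (F b) (mset (Lf b)) \<noteq> 0"
      using support_in[of "Lf b" "Hf b"] props[OF b] by auto
    then have nz: "cycle_index (quot_species (sum_list (Lf a)) (Hf a)) (mset (Lf b)) \<noteq> 0"
      using e props[OF a] by simp
    moreover have "sum_mset (mset (Lf b)) = sum_list (Lf a)"
      by (simp only: sum_mset_sum_list) (use props[OF a] props[OF b] in auto)
    ultimately have "mset (Lf b) = mset (Lf a)" using support_le[OF _ _ _ nz] props[OF a] by auto
    then have "mset a = mset b" using props[OF a] props[OF b] by simp
    then show ?thesis using partition_mset_eq[OF a b] by simp
  qed
  have iso_ci': "cycle_index (F a) = cycle_index (F b)"
    if a: "is_partition n a" and i: "species_iso (F a) (F b)" for a b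
  proof (rule iso_ci[OF i])
    fix m \<sigma> x assume sp: "\<sigma> permutes {0..<m}" and x: "x \<in> obj (F a) {0..<m}"
    have "\<And>h y. h \<in> Hf a \<Longrightarrow> (y < n \<longrightarrow> h y < n) \<and> (n \<le> y \<longrightarrow> h y = y)"
      using props[OF a] by (auto simp: good_def bp_def)
    then show "trans (F a) \<sigma> x \<in> obj (F a) {0..<m}"
      using q_closed[OF _ sp, of "Hf a" n x] x props[OF a] by simp
  qed
  have isoeq: "species_iso (F a) (F b) \<longleftrightarrow> a = b" if a: "is_partition n a" and b: "is_partition n b" for a b
    using iso_ci'[OF a] ci_inj[OF a b] iso_refl by blast
  have cieq: "cycle_index (F a) = cycle_index (F b) \<longleftrightarrow> a = b"
    if a: "is_partition n a" and b: "is_partition n b" for a b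
    using ci_inj[OF a b] by blast
  define P where "P = {a. is_partition n a}"
  have R: "{(a, b). is_partition n a \<and> is_partition n b \<and> species_iso (F a) (F b)} =
      {(a, b). a \<in> P \<and> b \<in> P \<and> a = b}"
    using isoeq unfolding P_def by blast
  have "num_iso_classes n F = card ((\<lambda>x. {x}) ` P)"
    unfolding num_iso_classes_def R P_def[symmetric] quotient_Id ..
  also have "\<dots> = card P" by (rule card_image) (auto simp: inj_on_def)
  finally have n1: "num_iso_classes n F = num_partitions n" by (simp add: num_partitions_def P_def)
  have "inj_on (\<lambda>a. cycle_index (F a)) P" using cieq unfolding P_def by (auto simp: inj_on_def)
  then have n2: "num_cycle_indices n F = num_partitions n"
    unfolding num_cycle_indices_def num_partitions_def P_def[symmetric] by (rule card_image)
  show ?thesis using isoeq[OF lam mu] cieq[OF lam mu] n1 n2 by blast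
qed



lemma young_good: "good L (young L)"
proof -
  let ?n = "sum_list L"
  have mem: "p \<in> young L \<longleftrightarrow> p permutes {0..<?n} \<and> (\<forall>x<?n. block_of L (p x) = block_of L x)" for p
    by (simp add: young_def)
  have i: "id \<in> young L" unfolding mem by simp
  have s: "std_perm L \<in> young L" unfolding mem using std_perm_permutes std_perm_in by blast
  have lt: "h x < ?n" if "h permutes {0..<?n}" "x < ?n" for h x
    using permutes_in_image[OF that(1), of x] that(2) by simp
  have b: "bp L h" if h: "h \<in> young L" for h
    unfolding bp_def using h lt permutes_not_in[of h "{0..<?n}"] unfolding mem by auto
  have c: "g \<circ> h \<in> young L" if g: "g \<in> young L" and h: "h \<in> young L" for g h
    using g h lt[of h] permutes_compose[of h "{0..<?n}" g] unfolding mem by auto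
  show ?thesis unfolding good_def using i s b c by blast
qed

lemma bp_id: "bp L id" by (simp add: bp_def)

lemma bp_comp: "bp L g \<Longrightarrow> bp L h \<Longrightarrow> bp L (g \<circ> h)" by (simp add: bp_def)

lemma gen_group_bp: "h \<in> gen_group S \<Longrightarrow> (\<forall>g\<in>S. bp L g) \<Longrightarrow> bp L h"
  by (induction rule: gen_group.induct) (auto simp: bp_id bp_comp)

lemma gen_group_comp: "g \<in> gen_group S \<Longrightarrow> h \<in> gen_group S \<Longrightarrow> g \<circ> h \<in> gen_group S"
  by (induction rule: gen_group.induct) (auto simp: comp_assoc intro: gen_group.intros)

lemma gen_good: "(\<forall>g\<in>S. bp L g) \<Longrightarrow> std_perm L \<in> gen_group S \<Longrightarrow> good L (gen_group S)"
  unfolding good_def using gen_group_bp gen_group_comp gen_group.gen_id by blast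

lemma cyc_good: "good L (cyc_group L)"
  unfolding cyc_group_def
proof (rule gen_good)
  show "\<forall>g\<in>{std_perm L}. bp L g" by (simp add: std_perm_bp)
  have "std_perm L \<circ> id \<in> gen_group {std_perm L}" by (intro gen_group.intros) auto
  then show "std_perm L \<in> gen_group {std_perm L}" by simp
qed

lemma block_of_app1: "x < sum_list p \<Longrightarrow> block_of (p @ q) x = block_of p x"
  by (induction p arbitrary: x) auto

lemma block_of_app2: "sum_list p \<le> x \<Longrightarrow> block_of (p @ q) x = length p + block_of q (x - sum_list p)"
  by (induction p arbitrary: x) (auto simp: diff_diff_add)

lemma std_perm_app: "std_perm (p @ q) x =
   (if x < sum_list p then std_perm p x else sum_list p + std_perm q (x - sum_list p))"
  by (induction p arbitrary: x) (auto simp: diff_diff_add)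

lemma shift_bp:
  assumes "bp q g"
  shows "bp (p @ q @ r) (shift_perm (sum_list p) (sum_list q) g)"
  unfolding bp_def
proof (rule conjI; intro allI impI)
  fix x assume x: "x < sum_list (p @ q @ r)"
  show "shift_perm (sum_list p) (sum_list q) g x < sum_list (p @ q @ r) \<and>
        block_of (p @ q @ r) (shift_perm (sum_list p) (sum_list q) g x) = block_of (p @ q @ r) x"
  proof (cases "sum_list p \<le> x \<and> x < sum_list p + sum_list q")
    case True
    define y where "y = x - sum_list p"
    have y: "y < sum_list q" "x = sum_list p + y" using True y_def by auto
    have gy: "g y < sum_list q" "block_of q (g y) = block_of q y" using assms y by (auto simp: bp_def)
    have "block_of (p @ q @ r) (sum_list p + g y) = length p + block_of q (g y)"
      using gy by (simp add: block_of_app2 block_of_app1)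
    moreover have "block_of (p @ q @ r) (sum_list p + y) = length p + block_of q y"
      using y by (simp add: block_of_app2 block_of_app1)
    ultimately show ?thesis using y gy by (simp add: shift_perm_def)
  next
    case False
    then have "shift_perm (sum_list p) (sum_list q) g x = x" unfolding shift_perm_def by auto
    then show ?thesis using x by simp
  qed
next
  fix x assume "sum_list (p @ q @ r) \<le> x"
  then show "shift_perm (sum_list p) (sum_list q) g x = x" by (simp add: shift_perm_def)
qed

definition cr :: "(nat \<times> nat) list \<Rightarrow> nat list" where
  "cr rs = concat (map (\<lambda>(i, m). replicate m i) rs)"

lemma kgens_bp: "g \<in> set (kgens s rs) \<Longrightarrow> s = sum_list p \<Longrightarrow> bp (p @ cr rs @ r) g"
proof (induction s rs arbitrary: p rule: kgens.induct)
  case (1 s) then show ?case by simp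
next
  case (2 s i m rs)
  note IH = "2.IH" and gm = "2.prems"(1) and sp = "2.prems"(2)
  have cr: "cr ((i, m) # rs) = replicate m i @ cr rs" by (simp add: cr_def)
  have sr: "sum_list (replicate m i) = i * m" by (simp only: sum_list_replicate of_nat_id mult.commute)
  from gm consider "g = shift_perm s (i * m) (std_perm (replicate m i))" | "g \<in> set (kgens (s + i * m) rs)"
    by auto
  then show ?case
  proof cases
    case c1: 1
    then show ?thesis using shift_bp[OF std_perm_bp[of "replicate m i"], where p=p and r="cr rs @ r"] sp cr sr
      by simp
  next
    case c2: 2
    have "s + i * m = sum_list (p @ replicate m i)" using sp sr by simp
    then have "bp ((p @ replicate m i) @ cr rs @ r) g"
      using IH[OF c2, of "p @ replicate m i"] by simp
    then show ?thesis using cr by simp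
  qed
qed

lemma shift_std_app: "shift_perm s (sum_list q + sum_list q') (std_perm (q @ q')) =
   shift_perm s (sum_list q) (std_perm q) \<circ> shift_perm (s + sum_list q) (sum_list q') (std_perm q')"
proof (rule ext)
  fix x
  have a: "z < sum_list q \<Longrightarrow> std_perm q z < sum_list q" for z using std_perm_in by blast
  have b: "z < sum_list q' \<Longrightarrow> std_perm q' z < sum_list q'" for z using std_perm_in by blast
  show "shift_perm s (sum_list q + sum_list q') (std_perm (q @ q')) x =
   (shift_perm s (sum_list q) (std_perm q) \<circ> shift_perm (s + sum_list q) (sum_list q') (std_perm q')) x"
    using a[of "x - s"] b[of "x - s - sum_list q"]
    by (auto simp: shift_perm_def std_perm_app diff_diff_add)
qed

lemma kgens_prod: "foldr (\<circ>) (kgens s rs) id = shift_perm s (sum_list (cr rs)) (std_perm (cr rs))"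
proof (induction s rs rule: kgens.induct)
  case (1 s) then show ?case by (auto simp: cr_def shift_perm_def fun_eq_iff)
next
  case (2 s i m rs)
  have cr: "cr ((i, m) # rs) = replicate m i @ cr rs" by (simp add: cr_def)
  have sr: "sum_list (replicate m i) = i * m" by (simp only: sum_list_replicate of_nat_id mult.commute)
  show ?case using 2 shift_std_app[of s "replicate m i" "cr rs"] cr sr by simp
qed

lemma foldr_gen: "set gs \<subseteq> S \<Longrightarrow> foldr (\<circ>) gs id \<in> gen_group S"
  by (induction gs) (auto intro: gen_group.intros)

lemma cr_runs_mset: "mset (cr (runs a)) = mset a"
proof -
  have "mset (cr (runs a)) = (\<Sum>i\<leftarrow>remdups a. replicate_mset (count_list a i) i)"
    by (simp add: cr_def runs_def mset_concat o_def)
  also have "\<dots> = (\<Sum>i\<in>set a. replicate_mset (count_list a i) i)"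
    by (simp add: sum.distinct_set_conv_list[symmetric])
  also have "\<dots> = mset a"
  proof (rule multiset_eqI)
    fix x
    have "count (\<Sum>i\<in>set a. replicate_mset (count_list a i) i) x =
        (\<Sum>i\<in>set a. if i = x then count_list a i else 0)"
      by (simp add: count_sum)
    also have "\<dots> = count (mset a) x" by (simp add: count_mset count_list_0_iff)
    finally show "count (\<Sum>i\<in>set a. replicate_mset (count_list a i) i) x = count (mset a) x" .
  qed
  finally show ?thesis .
qed

lemma K_good: "good (cr (runs a)) (K_group a)"
  unfolding K_group_def
proof (rule gen_good)
  show "\<forall>g\<in>set (kgens 0 (runs a)). bp (cr (runs a)) g"
    using kgens_bp[of _ 0 "runs a" "[]" "[]"] by simp
  have "foldr (\<circ>) (kgens 0 (runs a)) id \<in> gen_group (set (kgens 0 (runs a)))"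
    by (rule foldr_gen) simp
  moreover have "foldr (\<circ>) (kgens 0 (runs a)) id = std_perm (cr (runs a))"
    unfolding kgens_prod by (auto simp: fun_eq_iff shift_perm_def std_perm_out)
  ultimately show "std_perm (cr (runs a)) \<in> gen_group (set (kgens 0 (runs a)))" by simp
qed


theorem mainTheorem4:
  fixes n :: nat and lam mu :: "nat list"
  assumes "is_partition n lam" and "is_partition n mu"
  shows "(species_iso (E_sp lam) (E_sp mu) \<longleftrightarrow> lam = mu) \<and>
         (cycle_index (E_sp lam) = cycle_index (E_sp mu) \<longleftrightarrow> lam = mu) \<and>
         (species_iso (C_sp lam) (C_sp mu) \<longleftrightarrow> lam = mu) \<and>
         (cycle_index (C_sp lam) = cycle_index (C_sp mu) \<longleftrightarrow> lam = mu) \<and>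
         (species_iso (K_sp lam) (K_sp mu) \<longleftrightarrow> lam = mu) \<and>
         (cycle_index (K_sp lam) = cycle_index (K_sp mu) \<longleftrightarrow> lam = mu) \<and>
         num_iso_classes n E_sp = num_partitions n \<and>
         num_cycle_indices n E_sp = num_partitions n \<and>
         num_iso_classes n C_sp = num_partitions n \<and>
         num_cycle_indices n C_sp = num_partitions n \<and>
         num_iso_classes n K_sp = num_partitions n \<and>
         num_cycle_indices n K_sp = num_partitions n"
proof -
  have E: "(species_iso (E_sp lam) (E_sp mu) \<longleftrightarrow> lam = mu) \<and>
         (cycle_index (E_sp lam) = cycle_index (E_sp mu) \<longleftrightarrow> lam = mu) \<and>
         num_iso_classes n E_sp = num_partitions n \<and> num_cycle_indices n E_sp = num_partitions n"
    by (rule family_thm[where Hf=young and Lf="\<lambda>a. a"]) (use assms young_good in \<open>auto simp: E_sp_def\<close>)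
  have C: "(species_iso (C_sp lam) (C_sp mu) \<longleftrightarrow> lam = mu) \<and>
         (cycle_index (C_sp lam) = cycle_index (C_sp mu) \<longleftrightarrow> lam = mu) \<and>
         num_iso_classes n C_sp = num_partitions n \<and> num_cycle_indices n C_sp = num_partitions n"
    by (rule family_thm[where Hf=cyc_group and Lf="\<lambda>a. a"]) (use assms cyc_good in \<open>auto simp: C_sp_def\<close>)
  have K: "(species_iso (K_sp lam) (K_sp mu) \<longleftrightarrow> lam = mu) \<and>
         (cycle_index (K_sp lam) = cycle_index (K_sp mu) \<longleftrightarrow> lam = mu) \<and>
         num_iso_classes n K_sp = num_partitions n \<and> num_cycle_indices n K_sp = num_partitions n"
    by (rule family_thm[where Hf=K_group and Lf="\<lambda>a. cr (runs a)"])
      (use assms K_good cr_runs_mset in \<open>auto simp: K_sp_def\<close>)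
  show ?thesis using E C K by blast
qed

end
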